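(* Let $(Q,\cdot)$ be a quasigroup and $e\in Q$ an element such that $(ee\cdot xz)(ey\cdot z)=xy$ for all $x,y,z\in Q$. Then for all $x,y,z\in Q$: (1) $ee=e$; (2) $ex=xe$; (3) $ex\cdot ey=e\cdot yx$; (4) $e(ey\cdot ex)=xy$; (5) $(e\cdot xz)(ey\cdot z)=xy$; (6) $x\cdot xe=ex\cdot x=e$; (7) $xy\cdot x=x\cdot yx=y$.
   Context: A quasigroup is a magma in which $ax=b$ and $ya=b$ have unique solutions for all $a,b$. Juxtaposition denotes the operation, and $ab\cdot cd$ means $(ab)(cd)$. Such $(Q,\cdot,e)$ is called a double Ward quasigroup. *)

theory Defs
  imports Main
begin

definition quasigroup :: "('a \<Rightarrow> 'a \<Rightarrow> 'a) \<Rightarrow> bool" where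
  "quasigroup m \<longleftrightarrow> (\<forall>a b. (\<exists>!x. m a x = b) \<and> (\<exists>!y. m y a = b))"

end

theory Submission
  imports Defs
begin

lemma core:
  fixes m :: "'a \<Rightarrow> 'a \<Rightarrow> 'a" and e :: 'a and l r :: "'a \<Rightarrow> 'a \<Rightarrow> 'a"
  assumes l1: "\<And>a b. m a (l a b) = b" and l2: "\<And>a b. l a (m a b) = b"
   and r1: "\<And>a b. m (r b a) a = b" and r2: "\<And>a b. r (m b a) a = b"
    and A0: "\<And>x y z. m (m (m e e) (m x z)) (m (m e y) z) = m x y"
  shows "m e e = e
    \<and> (\<forall>x. m e x = m x e)
    \<and> (\<forall>x y. m (m e x) (m e y) = m e (m y x))
    \<and> (\<forall>x y. m e (m (m e y) (m e x)) = m x y)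
    \<and> (\<forall>x y z. m (m e (m x z)) (m (m e y) z) = m x y)
    \<and> (\<forall>x. m x (m x e) = e \<and> m (m e x) x = e)
    \<and> (\<forall>x y. m (m x y) x = y \<and> m x (m y x) = y)"
proof -
  have E: "m e e = e" by (metis A0 r1 r2)
  have A: "\<And>x y z. m (m e (m x z)) (m (m e y) z) = m x y" using A0 E by simp
  have P: "\<And>z w. m (m e (m e z)) (m w z) = w" by (metis A l1)
  have P1: "\<And>w. m e (m w e) = w" using P[of e] E by simp
  have P2: "\<And>y. m (m e y) e = y" by (metis P1 r1)
  have C: "\<And>x. m e x = m x e" by (metis E A P2)
  have D: "\<And>x. m x (m x e) = e" by (metis A P1)
  have F: "\<And>x. m (m e x) x = e" by (metis C P)
  have G1: "\<And>x y. m (m x y) x = y" by (metis C P)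
  have G2: "\<And>x y. m x (m y x) = y" by (metis A E P2)
  have H: "\<And>x y. m (m e x) (m e y) = m e (m y x)" by (metis A E P2)
  have I: "\<And>x y. m e (m (m e y) (m e x)) = m x y" by (metis G1 H)
  show ?thesis using E A C D F G1 G2 H I by blast
qed

theorem lemma4p1:
  fixes m :: "'a \<Rightarrow> 'a \<Rightarrow> 'a" and e :: 'a
  assumes "quasigroup m"
    and "\<forall>x y z. m (m (m e e) (m x z)) (m (m e y) z) = m x y"
  shows "m e e = e
    \<and> (\<forall>x. m e x = m x e)
    \<and> (\<forall>x y. m (m e x) (m e y) = m e (m y x))
    \<and> (\<forall>x y. m e (m (m e y) (m e x)) = m x y)
    \<and> (\<forall>x y z. m (m e (m x z)) (m (m e y) z) = m x y)
    \<and> (\<forall>x. m x (m x e) = e \<and> m (m e x) x = e)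
    \<and> (\<forall>x y. m (m x y) x = y \<and> m x (m y x) = y)"
proof -
  define l where "l a b = (THE x. m a x = b)" for a b
  define r where "r b a = (THE y. m y a = b)" for a b
  have q: "\<And>a b. (\<exists>!x. m a x = b) \<and> (\<exists>!y. m y a = b)" using assms(1) unfolding quasigroup_def by blast
  have q1: "\<And>a b. \<exists>!x. m a x = b" and q2: "\<And>a b. \<exists>!y. m y a = b" using q by blast+
  have l1: "\<And>a b. m a (l a b) = b" unfolding l_def by (rule theI'[OF q1])
  have l2: "\<And>a b. l a (m a b) = b" unfolding l_def by (rule the1_equality[OF q1 refl])
  have r1: "\<And>a b. m (r b a) a = b" unfolding r_def by (rule theI'[OF q2])
  have r2: "\<And>a b. r (m b a) a = b" unfolding r_def by (rule the1_equality[OF q2 refl])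
  have A0: "\<And>x y z. m (m (m e e) (m x z)) (m (m e y) z) = m x y" using assms(2) by blast
  show ?thesis by (rule core[where m=m and e=e and l=l and r=r, OF l1 l2 r1 r2 A0])
qed

end
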